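(* Let $\tau(\mathbb{P}^n)\to\mathbb{P}^n$ be the bundle of unit tangent vectors of $\mathbb{P}^n$ (for the Fubini–Study metric), with fiber $S^{2n-1}$. There is a fiberwise homotopy equivalence over $\mathbb{P}^n$ from $\tau(\mathbb{P}^n)\to\mathbb{P}^n$ to the evaluation fibration $ev\colon\mathrm{Hol}_1(n)\to\mathbb{P}^n$, restricting on fibers to a homotopy equivalence $S^{2n-1}\simeq\mathrm{Rat}_1(n)$.
   Context: $\mathrm{Hol}_1(n)$ is the space of holomorphic maps $\mathbb{P}^1\to\mathbb{P}^n$ of degree one; $ev(f)=f([1:0])$; $\mathrm{Rat}_1(n)=ev^{-1}([1:0:\dots:0])$ is the fiber over the basepoint. *)

theory Defs
  imports "HOL-Analysis.Analysis"
begin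

text \<open>Complex projective space P(C^k), modelled (homeomorphically) as the set of
  rank-one orthogonal projections: the line through v \<noteq> 0 is sent to v v^*/|v|^2.\<close>

definition proj :: "complex^'k \<Rightarrow> complex^'k^'k" where
  "proj v = (\<chi> i j. v$i * cnj (v$j) / complex_of_real ((norm v)^2))"

definition CP :: "(complex^'k^'k) set" where
  "CP = proj ` {v. v \<noteq> 0}"

text \<open>The metric induced by the Frobenius norm is twice the Fubini--Study metric
  g_FS(w,w) = |w|^2 (w orthogonal to a unit representative), so FS-unit vectors are
  those of Frobenius norm sqrt 2.\<close>

definition UTCP :: "((complex^'k^'k) \<times> (complex^'k^'k)) set" where
  "UTCP = {(P, X). P \<in> CP \<and>
      (\<exists>\<gamma>::real \<Rightarrow> complex^'k^'k. (\<forall>t. \<gamma> t \<in> CP) \<and> \<gamma> 0 = P \<and>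
            (\<gamma> has_vector_derivative X) (at 0)) \<and>
      norm X = sqrt 2}"

text \<open>Holomorphic maps P^1 \<rightarrow> P^n of degree one: exactly the maps
  [s:t] \<mapsto> [s a + t b] with a, b linearly independent.\<close>

definition Hol1 :: "((complex^2^2) \<Rightarrow> (complex^'k^'k)) set" where
  "Hol1 = {f. f \<in> extensional (CP :: (complex^2^2) set) \<and>
     (\<exists>a b :: complex^'k. (\<forall>c d. c *s a + d *s b = 0 \<longrightarrow> c = 0 \<and> d = 0) \<and>
        (\<forall>z::complex^2. z \<noteq> 0 \<longrightarrow> f (proj z) = proj (z$1 *s a + z$2 *s b)))}"

text \<open>Topology on Hol1: compact-open topology, which (P^1 compact, P^n metric) is the
  topology of uniform convergence, i.e. induced by the sup distance.\<close>

definition supdist :: "((complex^2^2) \<Rightarrow> (complex^'k^'k)) \<Rightarrow> ((complex^2^2) \<Rightarrow> (complex^'k^'k)) \<Rightarrow> real" where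
  "supdist f g = Sup ((\<lambda>P. dist (f P) (g P)) ` (CP :: (complex^2^2) set))"

definition Hol1_top :: "((complex^2^2) \<Rightarrow> (complex^'k^'k)) topology" where
  "Hol1_top = topology (\<lambda>U. U \<subseteq> Hol1 \<and>
      (\<forall>f\<in>U. \<exists>e>0. \<forall>g\<in>Hol1. supdist f g < e \<longrightarrow> g \<in> U))"

definition ev :: "((complex^2^2) \<Rightarrow> (complex^'k^'k)) \<Rightarrow> complex^'k^'k" where
  "ev f = f (proj (axis 1 1 :: complex^2))"

end

theory Submission
  imports Defs
begin


definition hip :: "complex^'n \<Rightarrow> complex^'n \<Rightarrow> complex" where
  "hip u w = (\<Sum>i\<in>UNIV. u$i * cnj (w$i))"
definition outer :: "complex^'n \<Rightarrow> complex^'n \<Rightarrow> complex^'n^'n" where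
  "outer u w = (\<chi> i j. u$i * cnj (w$j))"
definition sm :: "complex \<Rightarrow> complex^'n^'n \<Rightarrow> complex^'n^'n" where
  "sm c M = (\<chi> i j. c * M$i$j)"
definition adj :: "complex^'n^'n \<Rightarrow> complex^'n^'n" where
  "adj M = (\<chi> i j. cnj (M$j$i))"
definition tr :: "complex^'n^'n \<Rightarrow> complex" where
  "tr M = (\<Sum>i\<in>UNIV. M$i$i)"

lemma norm_sq_vec: "(norm (u::'a::real_normed_vector^'n))^2 = (\<Sum>i\<in>UNIV. (norm (u$i))^2)"
  by (simp add: norm_vec_def L2_set_def sum_nonneg)

lemma cscaleR: "r *\<^sub>R (z::complex) = of_real r * z"
  by (simp add: scaleR_conv_of_real)

lemma hip_self: "hip u u = complex_of_real ((norm u)^2)"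
proof -
  have "hip u u = (\<Sum>i\<in>UNIV. complex_of_real ((cmod (u$i))^2))"
    unfolding hip_def by (intro sum.cong refl) (simp add: complex_norm_square[symmetric])
  also have "\<dots> = complex_of_real ((norm u)^2)" by (simp add: norm_sq_vec)
  finally show ?thesis .
qed

lemma hip_self_real: "Re (hip u u) = (norm u)^2" "Im (hip u u) = 0"
  by (simp_all add: hip_self)

lemma hip_self_eq0: "hip u u = 0 \<longleftrightarrow> u = 0"
  by (simp add: hip_self)

lemma cnj_hip: "cnj (hip u w) = hip w u"
  by (simp add: hip_def mult.commute)

lemma hip_add_left: "hip (u + v) w = hip u w + hip v w"
  by (simp add: hip_def algebra_simps sum.distrib)
lemma hip_add_right: "hip w (u + v) = hip w u + hip w v"
  by (simp add: hip_def algebra_simps sum.distrib)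
lemma hip_diff_left: "hip (u - v) w = hip u w - hip v w"
  by (simp add: hip_def algebra_simps sum_subtractf)
lemma hip_diff_right: "hip w (u - v) = hip w u - hip w v"
  by (simp add: hip_def algebra_simps sum_subtractf)
lemma hip_smult_left: "hip (c *s u) w = c * hip u w"
  by (simp add: hip_def sum_distrib_left algebra_simps)
lemma hip_smult_right: "hip w (c *s u) = cnj c * hip w u"
  by (simp add: hip_def sum_distrib_left algebra_simps)
lemma hip_scaleR_left: "hip (r *\<^sub>R u) w = of_real r * hip u w"
  by (simp add: hip_def sum_distrib_left algebra_simps cscaleR)
lemma hip_scaleR_right: "hip w (r *\<^sub>R u) = of_real r * hip w u"
  by (simp add: hip_def sum_distrib_left algebra_simps cscaleR)

lemmas hip_simps = hip_add_left hip_add_right hip_diff_left hip_diff_right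
  hip_smult_left hip_smult_right hip_scaleR_left hip_scaleR_right

lemma proj_eq: "proj u = sm (1 / hip u u) (outer u u)"
  by (simp add: proj_def sm_def outer_def hip_self vec_eq_iff)

lemma outer_mult: "outer a b ** outer c d = sm (hip c b) (outer a d)"
  by (simp add: outer_def sm_def hip_def matrix_matrix_mult_def vec_eq_iff sum_distrib_left
      sum_distrib_right algebra_simps)

lemma sm_mult_left: "sm a M ** N = sm a (M ** N)"
  by (simp add: sm_def matrix_matrix_mult_def vec_eq_iff sum_distrib_left algebra_simps)
lemma sm_mult_right: "M ** sm a N = sm a (M ** N)"
  by (simp add: sm_def matrix_matrix_mult_def vec_eq_iff sum_distrib_left algebra_simps)
lemma sm_sm: "sm a (sm b M) = sm (a*b) M"
  by (simp add: sm_def vec_eq_iff)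
lemma sm_1: "sm 1 M = M"
  by (simp add: sm_def vec_eq_iff)
lemma tr_outer: "tr (outer a b) = hip a b"
  by (simp add: tr_def outer_def hip_def)
lemma tr_sm: "tr (sm a M) = a * tr M"
  by (simp add: tr_def sm_def sum_distrib_left)
lemma tr_add: "tr (M + N) = tr M + tr N"
  by (simp add: tr_def sum.distrib)
lemma tr_diff: "tr (M - N) = tr M - tr N"
  by (simp add: tr_def sum_subtractf)
lemma adj_outer: "adj (outer a b) = outer b a"
  by (simp add: adj_def outer_def vec_eq_iff)
lemma adj_sm: "adj (sm c M) = sm (cnj c) (adj M)"
  by (simp add: adj_def sm_def vec_eq_iff)
lemma adj_add: "adj (M + N) = adj M + adj N"
  by (simp add: adj_def vec_eq_iff)
lemma adj_scaleR: "adj (r *\<^sub>R M) = r *\<^sub>R adj M"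
  by (simp add: adj_def vec_eq_iff cscaleR)
lemma adj_adj: "adj (adj M) = M"
  by (simp add: adj_def vec_eq_iff)
lemma scaleR_sm: "r *\<^sub>R M = sm (of_real r) M"
  by (simp add: sm_def vec_eq_iff cscaleR)
lemma sm_add: "sm a (M + N) = sm a M + sm a N"
  by (simp add: sm_def vec_eq_iff algebra_simps)
lemma sm_diff: "sm a (M - N) = sm a M - sm a N"
  by (simp add: sm_def vec_eq_iff algebra_simps)
lemma sm_add_left: "sm (a + b) M = sm a M + sm b M"
  by (simp add: sm_def vec_eq_iff algebra_simps)
lemma outer_add_left: "outer (u + v) w = outer u w + outer v w"
  by (simp add: outer_def vec_eq_iff algebra_simps)
lemma outer_add_right: "outer w (u + v) = outer w u + outer w v"
  by (simp add: outer_def vec_eq_iff algebra_simps)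
lemma outer_diff_left: "outer (u - v) w = outer u w - outer v w"
  by (simp add: outer_def vec_eq_iff algebra_simps)
lemma outer_diff_right: "outer w (u - v) = outer w u - outer w v"
  by (simp add: outer_def vec_eq_iff algebra_simps)
lemma outer_smult_left: "outer (c *s u) w = sm c (outer u w)"
  by (simp add: outer_def sm_def vec_eq_iff algebra_simps)
lemma outer_smult_right: "outer w (c *s u) = sm (cnj c) (outer w u)"
  by (simp add: outer_def sm_def vec_eq_iff algebra_simps)
lemma outer_scaleR_left: "outer (r *\<^sub>R u) w = r *\<^sub>R (outer u w)"
  by (simp add: outer_def vec_eq_iff algebra_simps cscaleR)
lemma outer_scaleR_right: "outer w (r *\<^sub>R u) = r *\<^sub>R (outer w u)"
  by (simp add: outer_def vec_eq_iff algebra_simps cscaleR)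

lemma norm_sq_mat: "(norm (M::complex^'n^'m))^2 = (\<Sum>i\<in>UNIV. \<Sum>j\<in>UNIV. (cmod (M$i$j))^2)"
  by (simp add: norm_sq_vec)

lemma norm_outer: "norm (outer u w) = norm u * norm w"
proof -
  have "(norm (outer u w))^2 = (\<Sum>i\<in>UNIV. \<Sum>j\<in>UNIV. (cmod (u$i))^2 * (cmod (w$j))^2)"
    by (simp add: norm_sq_mat outer_def norm_mult power_mult_distrib)
  also have "\<dots> = (norm u)^2 * (norm w)^2"
    by (simp add: norm_sq_vec sum_product)
  finally have "(norm (outer u w))^2 = (norm u * norm w)^2" by (simp add: power_mult_distrib)
  then show ?thesis by (simp add: power2_eq_iff_nonneg)
qed

definition ON :: "complex^'n \<Rightarrow> complex^'n \<Rightarrow> bool" where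
  "ON v w \<longleftrightarrow> hip v v = 1 \<and> hip w w = 1 \<and> hip v w = 0"

lemma outer_mult_vec: "outer a b *v c = hip c b *s a"
  by (simp add: outer_def hip_def matrix_vector_mult_def vec_eq_iff sum_distrib_left algebra_simps)

lemma normsq_cplx: "complex_of_real ((norm (M::complex^'n^'m))^2) = (\<Sum>i\<in>UNIV. \<Sum>j\<in>UNIV. M$i$j * cnj (M$i$j))"
  unfolding norm_sq_mat of_real_sum by (intro sum.cong refl) (simp add: complex_norm_square[symmetric])

lemma normsq_sym: "complex_of_real ((norm (outer w v + outer v w))^2)
   = 2 * hip w w * hip v v + (hip w v)^2 + (hip v w)^2"
proof -
  have e: "(outer w v + outer v w)$i$j * cnj ((outer w v + outer v w)$i$j)
     = (w$i * cnj (w$i)) * (v$j * cnj (v$j)) + (v$i * cnj (v$i)) * (w$j * cnj (w$j))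
       + (w$i * cnj (v$i)) * (w$j * cnj (v$j)) + (v$i * cnj (w$i)) * (v$j * cnj (w$j))" for i j
    by (simp add: outer_def algebra_simps)
  show ?thesis
    unfolding normsq_cplx e
    by (simp add: sum.distrib sum_product[symmetric] hip_def power2_eq_square)
qed

lemma proj_in_CP: "u \<noteq> 0 \<Longrightarrow> proj u \<in> CP"
  by (simp add: CP_def)

lemma proj_unit: "hip v v = 1 \<Longrightarrow> proj v = outer v v"
  by (simp add: proj_eq sm_1)

lemma CP_unit: assumes "M \<in> CP" obtains v where "hip v v = 1" "M = outer v v"
proof -
  from assms obtain u where u: "u \<noteq> 0" "M = proj u" by (auto simp: CP_def)
  define v where "v = (1 / norm u) *\<^sub>R u"
  have "hip v v = 1" using u by (simp add: v_def hip_simps hip_self power2_eq_square)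
  moreover have "M = outer v v"
    using u by (simp add: v_def proj_eq outer_scaleR_left outer_scaleR_right hip_self scaleR_sm sm_sm
        power2_eq_square)
  ultimately show ?thesis using that by blast
qed

lemma outer_unit_in_CP: "hip v v = 1 \<Longrightarrow> outer v v \<in> CP"
  by (metis proj_unit proj_in_CP hip_self_eq0 zero_neq_one)

lemma CP_idem: "M \<in> CP \<Longrightarrow> M ** M = M"
  by (elim CP_unit) (simp add: outer_mult sm_1)

lemma CP_adj: "M \<in> CP \<Longrightarrow> adj M = M"
  by (elim CP_unit) (simp add: adj_outer)

lemma linear_adj: "linear adj"
  by (rule linearI) (simp_all add: adj_add adj_scaleR)

lemma bl_adj: "bounded_linear adj"
  using linear_adj linear_conv_bounded_linear by blast

lemma bilinear_mm: "bilinear (\<lambda>(A::complex^'n^'n) B. A ** B)"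
  unfolding bilinear_def
  by (auto intro!: linearI simp: matrix_add_ldistrib matrix_matrix_mult_def vec_eq_iff
      sum.distrib algebra_simps scaleR_sum_right cscaleR sum_distrib_left)

lemma bb_mm: "bounded_bilinear (\<lambda>(A::complex^'n^'n) B. A ** B)"
  using bilinear_mm bilinear_conv_bounded_bilinear by blast

lemma UTCP_imp:
  assumes "(P, X) \<in> UTCP"
  shows "\<exists>v w. ON v w \<and> P = outer v v \<and> X = outer w v + outer v w"
proof -
  from assms obtain \<gamma> where g: "\<And>t. \<gamma> t \<in> CP" "\<gamma> 0 = P" "(\<gamma> has_vector_derivative X) (at 0)"
    and nX: "norm X = sqrt 2" and P: "P \<in> CP"
    unfolding UTCP_def by blast
  have d1: "((\<lambda>t. adj (\<gamma> t)) has_vector_derivative adj X) (at 0)"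
    by (rule bounded_linear.has_vector_derivative[OF bl_adj g(3)])
  have "(\<lambda>t. adj (\<gamma> t)) = \<gamma>" using g(1) CP_adj by auto
  with d1 have aX: "adj X = X" using g(3) vector_derivative_unique_at by metis
  have d2: "((\<lambda>t. \<gamma> t ** \<gamma> t) has_vector_derivative \<gamma> 0 ** X + X ** \<gamma> 0) (at 0)"
    by (rule bounded_bilinear.has_vector_derivative[OF bb_mm g(3) g(3)])
  have "(\<lambda>t. \<gamma> t ** \<gamma> t) = \<gamma>" using g(1) CP_idem by auto
  with d2 have XPX: "X = P ** X + X ** P" using g vector_derivative_unique_at by metis
  obtain v where v: "hip v v = 1" "P = outer v v" using P CP_unit by blast
  obtain w where w: "w = X *v v" by blast
  have "X ** P = outer w v"
    by (simp add: v w outer_def matrix_matrix_mult_def matrix_vector_mult_def vec_eq_iff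
        sum_distrib_right sum_distrib_left mult_ac)
  moreover have "P ** X = outer v w"
  proof -
    have "cnj (X$j$k) = X$k$j" for j k using aX by (simp add: adj_def vec_eq_iff)
    then show ?thesis
      by (simp add: v w outer_def matrix_matrix_mult_def matrix_vector_mult_def vec_eq_iff
          sum_distrib_left algebra_simps)
  qed
  ultimately have X: "X = outer w v + outer v w" using XPX by simp
  have "X *v v = (outer w v + outer v w) *v v" using X by simp
  then have "w = hip v v *s w + hip v w *s v"
    by (simp add: w[symmetric] matrix_vector_mult_add_rdistrib outer_mult_vec)
  then have "hip v w *s v = 0" using v by (simp add: vec_eq_iff)
  moreover have "v \<noteq> 0" using v by (metis hip_self_eq0 zero_neq_one)
  ultimately have vw: "hip v w = 0" by (simp add: vec_eq_iff) (metis vec_eq_iff zero_index)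
  have "complex_of_real ((norm X)^2) = 2 * hip w w"
    using normsq_sym[of w v] X v vw by (simp add: cnj_hip[of v w, symmetric])
  then have "hip w w = 1" using nX by simp
  then show ?thesis using v vw X unfolding ON_def by blast
qed

lemma ON_wv: "ON v w \<Longrightarrow> hip w v = 0"
  by (metis ON_def cnj_hip complex_cnj_zero)

lemma norm_X_ON: "ON v w \<Longrightarrow> norm (outer w v + outer v w) = sqrt 2"
proof -
  assume on: "ON v w"
  have "complex_of_real ((norm (outer w v + outer v w))^2) = 2"
    using normsq_sym[of w v] on ON_wv[OF on] by (simp add: ON_def)
  then have "(norm (outer w v + outer v w))^2 = 2" by (metis of_real_numeral of_real_eq_iff)
  then show ?thesis by (metis norm_ge_zero real_sqrt_unique)
qed

lemma UTCP_intro: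
  assumes on: "ON v w"
  shows "(outer v v, outer w v + outer v w) \<in> UTCP"
proof -
  have vv: "hip v v = 1" and ww: "hip w w = 1" and vw: "hip v w = 0" and wv: "hip w v = 0"
    using on ON_wv[OF on] by (auto simp: ON_def)
  define \<gamma> where "\<gamma> t = proj (cos t *\<^sub>R v + sin t *\<^sub>R w)" for t
  have hu: "hip (cos t *\<^sub>R v + sin t *\<^sub>R w) (cos t *\<^sub>R v + sin t *\<^sub>R w) = 1" for t
  proof -
    show ?thesis
      by (simp add: hip_simps vv ww vw wv)
        (metis of_real_add of_real_mult of_real_1 sin_cos_squared_add3)
  qed
  have ge: "\<gamma> t = (cos t)^2 *\<^sub>R outer v v + (cos t * sin t) *\<^sub>R (outer w v + outer v w)
       + (sin t)^2 *\<^sub>R outer w w" for t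
    unfolding \<gamma>_def proj_unit[OF hu]
    by (simp add: outer_add_left outer_add_right outer_scaleR_left outer_scaleR_right
        algebra_simps power2_eq_square)
  have inCP: "\<gamma> t \<in> CP" for t
    unfolding \<gamma>_def by (rule proj_in_CP) (metis hu hip_self_eq0 zero_neq_one)
  have "((\<lambda>t. (cos t)^2 *\<^sub>R outer v v + (cos t * sin t) *\<^sub>R (outer w v + outer v w)
       + (sin t)^2 *\<^sub>R outer w w) has_vector_derivative (outer w v + outer v w)) (at 0)"
    by (rule has_vector_derivative_eq_rhs, (rule derivative_intros)+, simp_all)
  then have "(\<gamma> has_vector_derivative (outer w v + outer v w)) (at 0)"
    using ge by (metis (no_types, lifting) ext)
  moreover have "\<gamma> 0 = outer v v" by (simp add: \<gamma>_def proj_unit vv)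
  ultimately show ?thesis
    unfolding UTCP_def using inCP norm_X_ON[OF on] outer_unit_in_CP[OF vv] by blast
qed

definition indep :: "complex^'n \<Rightarrow> complex^'n \<Rightarrow> bool" where
  "indep v b \<longleftrightarrow> (\<forall>c d. c *s v + d *s b = 0 \<longrightarrow> c = 0 \<and> d = 0)"

definition Lm :: "(complex^'n^'n) \<times> (complex^'n^'n) \<times> (complex^'n^'n) \<Rightarrow> complex^2^2 \<Rightarrow> complex^'n^'n" where
  "Lm x Z = (case x of (P, B, C) \<Rightarrow>
     (\<chi> i j. Z$1$1 * P$i$j + Z$1$2 * B$i$j + Z$2$1 * cnj (B$j$i) + Z$2$2 * C$i$j))"

definition Fm :: "(complex^'n^'n) \<times> (complex^'n^'n) \<times> (complex^'n^'n) \<Rightarrow> complex^2^2 \<Rightarrow> complex^'n^'n" where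
  "Fm x Z = sm (1 / tr (Lm x Z)) (Lm x Z)"

definition mkf :: "(complex^'n^'n) \<times> (complex^'n^'n) \<times> (complex^'n^'n) \<Rightarrow> (complex^2^2 \<Rightarrow> complex^'n^'n)" where
  "mkf x = restrict (Fm x) (CP :: (complex^2^2) set)"

definition Adm :: "((complex^'n^'n) \<times> (complex^'n^'n) \<times> (complex^'n^'n)) set" where
  "Adm = {(outer v v, outer v b, outer b b) | v b. indep v b}"

lemma indep_nz: fixes z :: "complex^2" assumes "indep v b" "z \<noteq> 0" shows "z$1 *s v + z$2 *s b \<noteq> 0"
proof
  assume "z$1 *s v + z$2 *s b = 0"
  then have "z$1 = 0 \<and> z$2 = 0" using assms(1) unfolding indep_def by blast
  then have "z = 0" by (simp add: vec_eq_iff forall_2)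
  then show False using assms(2) by simp
qed

lemma scal: "a \<noteq> 0 \<Longrightarrow> b \<noteq> 0 \<Longrightarrow> 1 / (1 / a * b) * (1 / a) = 1 / (b::complex)"
  by (simp add: field_simps)

lemma Lm_proj: "Lm (outer v v, outer v b, outer b b) (proj z)
   = sm (1 / hip z z) (outer (z$1 *s v + z$2 *s b) (z$1 *s v + z$2 *s b))"
  by (simp add: Lm_def proj_eq sm_def outer_def vec_eq_iff algebra_simps)

lemma Fm_proj:
  assumes "indep v b" "z \<noteq> 0"
  shows "Fm (outer v v, outer v b, outer b b) (proj z) = proj (z$1 *s v + z$2 *s b)"
    and "tr (Lm (outer v v, outer v b, outer b b) (proj z)) \<noteq> 0"
proof -
  let ?u = "z$1 *s v + z$2 *s b"
  have u: "hip ?u ?u \<noteq> 0" using indep_nz[OF assms] hip_self_eq0 by blast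
  have zz: "hip z z \<noteq> 0" using assms(2) hip_self_eq0 by blast
  show "tr (Lm (outer v v, outer v b, outer b b) (proj z)) \<noteq> 0"
    using u zz by (simp add: Lm_proj tr_sm tr_outer)
  show "Fm (outer v v, outer v b, outer b b) (proj z) = proj ?u"
  proof -
    have "Fm (outer v v, outer v b, outer b b) (proj z)
       = sm (1 / (1 / hip z z * hip ?u ?u)) (sm (1 / hip z z) (outer ?u ?u))"
      unfolding Fm_def Lm_proj tr_sm tr_outer ..
    also have "\<dots> = sm (1 / hip ?u ?u) (outer ?u ?u)"
      unfolding sm_sm using scal[OF zz u] by simp
    also have "\<dots> = proj ?u" by (rule proj_eq[symmetric])
    finally show ?thesis .
  qed
qed




lemma CP_proj_cases: assumes "Z \<in> CP" obtains z where "z \<noteq> 0" "Z = proj z"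
  using assms by (auto simp: CP_def)

lemma Adm_tr: assumes "x \<in> Adm" "Z \<in> CP" shows "tr (Lm x Z) \<noteq> 0"
proof -
  obtain v b where x: "x = (outer v v, outer v b, outer b b)" "indep v b"
    using assms(1) unfolding Adm_def by blast
  obtain z where z: "z \<noteq> 0" "Z = proj z" using assms(2) by (rule CP_proj_cases)
  show ?thesis unfolding x(1) z(2) by (rule Fm_proj(2)[OF x(2) z(1)])
qed

lemma mkf_apply: "Z \<in> CP \<Longrightarrow> mkf x Z = Fm x Z"
  unfolding mkf_def by (rule restrict_apply')

lemma mkf_Hol1: assumes "indep v b" shows "mkf (outer v v, outer v b, outer b b) \<in> Hol1"
proof -
  have e: "mkf (outer v v, outer v b, outer b b) \<in> extensional CP" by (simp add: mkf_def)
  have i: "\<forall>c d. c *s v + d *s b = 0 \<longrightarrow> c = 0 \<and> d = 0" using assms by (simp add: indep_def)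
  have z: "\<forall>z::complex^2. z \<noteq> 0 \<longrightarrow> mkf (outer v v, outer v b, outer b b) (proj z) = proj (z$1 *s v + z$2 *s b)"
  proof (intro allI impI)
    fix z :: "complex^2" assume z: "z \<noteq> 0"
    have "mkf (outer v v, outer v b, outer b b) (proj z) = Fm (outer v v, outer v b, outer b b) (proj z)"
      by (rule mkf_apply[OF proj_in_CP[OF z]])
    also have "\<dots> = proj (z$1 *s v + z$2 *s b)" by (rule Fm_proj(1)[OF assms z])
    finally show "mkf (outer v v, outer v b, outer b b) (proj z) = proj (z$1 *s v + z$2 *s b)" .
  qed
  show ?thesis unfolding Hol1_def mem_Collect_eq
    by (rule conjI[OF e], rule exI[of _ v], rule exI[of _ b], rule conjI[OF i], rule z)
qed

lemma Adm_Hol1: assumes "x \<in> Adm" shows "mkf x \<in> Hol1"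
proof -
  obtain v b where x: "x = (outer v v, outer v b, outer b b)" "indep v b"
    using assms unfolding Adm_def by blast
  show ?thesis unfolding x(1) by (rule mkf_Hol1[OF x(2)])
qed

definition E1 :: "complex^2^2" where "E1 = proj (axis 1 1)"
definition E2 :: "complex^2^2" where "E2 = proj (axis 2 1)"
definition E3 :: "complex^2^2" where "E3 = proj (\<chi> i. (1::complex))"

lemma chi1_nz: "(\<chi> i. (1::complex)) \<noteq> (0::complex^2)"
proof
  assume "(\<chi> i. (1::complex)) = (0::complex^2)"
  then have "(\<chi> i. (1::complex)) $ (1::2) = 0" by simp
  then show False by simp
qed

lemma E_in_CP: "E1 \<in> CP" "E2 \<in> CP" "E3 \<in> CP"
  unfolding E1_def E2_def E3_def
    apply (rule proj_in_CP, metis axis_nth one_neq_zero vec_eq_iff zero_index)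
   apply (rule proj_in_CP, metis axis_nth one_neq_zero vec_eq_iff zero_index)
  apply (rule proj_in_CP, rule chi1_nz)
  done

lemma mkf_E:
  assumes "indep v b"
  shows "mkf (outer v v, outer v b, outer b b) E1 = proj v"
    "mkf (outer v v, outer v b, outer b b) E2 = proj b"
    "mkf (outer v v, outer v b, outer b b) E3 = proj (v + b)"
proof -
  have a1: "axis 1 (1::complex) \<noteq> (0::complex^2)" "axis 2 (1::complex) \<noteq> (0::complex^2)"
    "(\<chi> i. (1::complex)) \<noteq> (0::complex^2)"
    by (metis axis_nth one_neq_zero vec_eq_iff zero_index, metis axis_nth one_neq_zero vec_eq_iff zero_index, rule chi1_nz)
  show "mkf (outer v v, outer v b, outer b b) E1 = proj v"
    using Fm_proj(1)[OF assms a1(1)] E_in_CP by (simp add: mkf_def E1_def axis_def)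
  show "mkf (outer v v, outer v b, outer b b) E2 = proj b"
    using Fm_proj(1)[OF assms a1(2)] E_in_CP by (simp add: mkf_def E2_def axis_def)
  show "mkf (outer v v, outer v b, outer b b) E3 = proj (v + b)"
    using Fm_proj(1)[OF assms a1(3)] E_in_CP by (simp add: mkf_def E3_def)
qed

lemma ev_eq: "ev h = h E1"
  by (simp add: ev_def E1_def)

lemma proj_scaleR: "r \<noteq> 0 \<Longrightarrow> proj (r *\<^sub>R u) = proj u"
  by (simp add: proj_eq hip_simps outer_scaleR_left outer_scaleR_right scaleR_sm sm_sm)


lemma Hol1_repr:
  assumes "h \<in> Hol1"
  obtains v b where "hip v v = 1" "indep v b" "h = mkf (outer v v, outer v b, outer b b)"
proof -
  have h: "h \<in> extensional CP" using assms by (simp add: Hol1_def)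
  from assms obtain a b where ind: "indep a b"
    and hz: "\<And>z::complex^2. z \<noteq> 0 \<Longrightarrow> h (proj z) = proj (z$1 *s a + z$2 *s b)"
    unfolding Hol1_def indep_def mem_Collect_eq by metis
  have a0: "a \<noteq> 0"
  proof
    assume "a = 0"
    then have "1 *s a + 0 *s b = 0" by simp
    with ind have "(1::complex) = 0" unfolding indep_def by blast
    then show False by simp
  qed
  define v where "v = (1 / norm a) *\<^sub>R a"
  define b1 where "b1 = (1 / norm a) *\<^sub>R b"
  have vv: "hip v v = 1" using a0 by (simp add: v_def hip_simps hip_self power2_eq_square)
  have ind1: "indep v b1" unfolding indep_def
  proof (intro allI impI)
    fix c d assume "c *s v + d *s b1 = 0"
    then have "(c / of_real (norm a)) *s a + (d / of_real (norm a)) *s b = 0"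
      by (simp add: v_def b1_def vec_eq_iff cscaleR)
    then have "c / of_real (norm a) = 0 \<and> d / of_real (norm a) = 0" using ind unfolding indep_def by blast
    then show "c = 0 \<and> d = 0" using a0 by simp
  qed
  have "h = mkf (outer v v, outer v b1, outer b1 b1)"
  proof (rule extensionalityI[OF h])
    show "mkf (outer v v, outer v b1, outer b1 b1) \<in> extensional CP" by (simp add: mkf_def)
    fix Z :: "complex^2^2" assume "Z \<in> CP"
    then obtain z where z: "z \<noteq> 0" "Z = proj z" by (rule CP_proj_cases)
    have eq: "z$1 *s a + z$2 *s b = norm a *\<^sub>R (z$1 *s v + z$2 *s b1)"
    proof -
      have 1: "norm a *\<^sub>R v = a" "norm a *\<^sub>R b1 = b" using a0 by (simp_all add: v_def b1_def)
      have "norm a *\<^sub>R (z$1 *s v + z$2 *s b1) = z$1 *s (norm a *\<^sub>R v) + z$2 *s (norm a *\<^sub>R b1)"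
        by (simp add: vec_eq_iff cscaleR algebra_simps)
      then show ?thesis by (simp add: 1)
    qed
    have "h Z = proj (z$1 *s a + z$2 *s b)" unfolding z(2) by (rule hz[OF z(1)])
    also have "\<dots> = proj (norm a *\<^sub>R (z$1 *s v + z$2 *s b1))" by (simp only: eq)
    also have "\<dots> = proj (z$1 *s v + z$2 *s b1)" using a0 by (intro proj_scaleR) simp
    finally have "h Z = proj (z$1 *s v + z$2 *s b1)" .
    moreover have "mkf (outer v v, outer v b1, outer b1 b1) Z = proj (z$1 *s v + z$2 *s b1)"
      using Fm_proj(1)[OF ind1 z(1)] \<open>Z \<in> CP\<close> unfolding mkf_def z(2) by simp
    ultimately show "h Z = mkf (outer v v, outer v b1, outer b1 b1) Z" by simp
  qed
  then show ?thesis using that vv ind1 by blast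
qed

definition gB :: "complex^'n^'n \<Rightarrow> complex^'n^'n \<Rightarrow> complex^'n^'n \<Rightarrow> complex^'n^'n" where
  "gB P Q R = (-1 / Re (tr Q - tr (R ** Q))) *\<^sub>R (P ** Q - P ** (R ** Q))"
definition gM :: "complex^'n^'n \<Rightarrow> complex^'n^'n \<Rightarrow> complex^'n^'n \<Rightarrow> complex^'n^'n" where
  "gM P Q R = gB P Q R - gB P Q R ** P"
definition gX :: "complex^'n^'n \<Rightarrow> complex^'n^'n \<Rightarrow> complex^'n^'n \<Rightarrow> complex^'n^'n" where
  "gX P Q R = (1 / norm (gM P Q R)) *\<^sub>R (gM P Q R + adj (gM P Q R))"

lemma indep_b0: "indep v b \<Longrightarrow> b \<noteq> 0"
  unfolding indep_def by (metis add_0 one_neq_zero vector_smult_lzero vector_smult_rzero)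

lemma indep_sum0: "indep v b \<Longrightarrow> v + b \<noteq> 0"
proof
  assume "indep v b" "v + b = 0"
  then have "1 *s v + 1 *s b = 0" by simp
  with \<open>indep v b\<close> have "(1::complex) = 0" unfolding indep_def by blast
  then show False by simp
qed

lemma indep_perp0: "indep v b \<Longrightarrow> b - c *s v \<noteq> 0"
proof
  assume "indep v b" "b - c *s v = 0"
  then have "(-c) *s v + 1 *s b = 0" by (simp add: vec_eq_iff)
  with \<open>indep v b\<close> have "(1::complex) = 0" unfolding indep_def by blast
  then show False by simp
qed

lemma scalar_id0:
  fixes c \<beta> \<sigma> :: complex
  assumes "\<beta> \<noteq> 0" "\<sigma> \<noteq> 0" "\<sigma> = 1 + c + cnj c + \<beta>"
  shows "1 / \<beta> * c - 1 / \<sigma> * (1 / \<beta>) * (c + \<beta>) * (1 + c)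
       = - (1 - 1 / \<sigma> * (1 / \<beta>) * (c + \<beta>) * (cnj c + \<beta>))"
    and "1 - 1 / \<sigma> * (1 / \<beta>) * (c + \<beta>) * (cnj c + \<beta>)
       = (\<beta> - c * cnj c) / (\<sigma> * \<beta>)"
proof -
  have 1: "1 / \<beta> * c - 1 / \<sigma> * (1 / \<beta>) * (c + \<beta>) * (1 + c) = (c*\<sigma> - (c+\<beta>)*(1+c)) / (\<sigma>*\<beta>)"
    using assms(1,2) by (simp add: field_simps)
  have 2: "1 - 1 / \<sigma> * (1 / \<beta>) * (c + \<beta>) * (cnj c + \<beta>) = (\<sigma>*\<beta> - (c+\<beta>)*(cnj c+\<beta>)) / (\<sigma>*\<beta>)"
    using assms(1,2) by (simp add: field_simps)
  have 3: "c*\<sigma> - (c+\<beta>)*(1+c) = -(\<sigma>*\<beta> - (c+\<beta>)*(cnj c+\<beta>))"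
    unfolding assms(3) by (simp add: algebra_simps)
  have 4: "\<sigma>*\<beta> - (c+\<beta>)*(cnj c+\<beta>) = \<beta> - c * cnj c"
    unfolding assms(3) by (simp add: algebra_simps)
  show "1 / \<beta> * c - 1 / \<sigma> * (1 / \<beta>) * (c + \<beta>) * (1 + c)
       = - (1 - 1 / \<sigma> * (1 / \<beta>) * (c + \<beta>) * (cnj c + \<beta>))"
    unfolding 1 2 3 by (simp add: minus_divide_left)
  show "1 - 1 / \<sigma> * (1 / \<beta>) * (c + \<beta>) * (cnj c + \<beta>) = (\<beta> - c * cnj c) / (\<sigma> * \<beta>)"
    unfolding 2 4 ..
qed

lemmas scalar_id = scalar_id0[OF _ _ refl]

lemma gB_key:
  assumes vv: "hip v v = 1" and ind: "indep v b"
  shows "Re (tr (proj b) - tr (proj (v + b) ** proj b)) > 0"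
    and "gB (outer v v) (proj b) (proj (v + b)) = outer v b"
proof -
  obtain c where c_def: "hip b v = c" by blast
  obtain \<beta> where \<beta>_def: "hip b b = \<beta>" by blast
  have vb: "hip v b = cnj c" by (simp add: c_def[symmetric] cnj_hip)
  have \<sigma>: "hip (v + b) (v + b) = 1 + c + cnj c + \<beta>"
    unfolding hip_simps vv vb c_def \<beta>_def by (simp add: algebra_simps)
  have b0: "\<beta> \<noteq> 0" using indep_b0[OF ind] hip_self_eq0[of b] \<beta>_def by simp
  have s0: "1 + c + cnj c + \<beta> \<noteq> 0" using indep_sum0[OF ind] hip_self_eq0[of "v+b"] \<sigma> by simp
  have bsv: "hip b (v + b) = c + \<beta>" "hip (v + b) b = cnj c + \<beta>" "hip (v + b) v = 1 + c"
    unfolding hip_simps vv vb c_def \<beta>_def by simp_all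
  have Q: "proj b = sm (1 / \<beta>) (outer b b)" by (simp add: proj_eq \<beta>_def)
  have R: "proj (v + b) = sm (1 / (1 + c + cnj c + \<beta>)) (outer (v + b) (v + b))"
    by (simp add: proj_eq \<sigma>)
  have RQ: "proj (v + b) ** proj b = sm (1 / (1 + c + cnj c + \<beta>) * (1 / \<beta>) * (c + \<beta>)) (outer (v + b) b)"
    unfolding Q R sm_mult_left sm_mult_right outer_mult sm_sm bsv by (simp add: mult_ac)
  have trQ: "tr (proj b) = 1" unfolding Q tr_sm tr_outer using b0 by (simp add: \<beta>_def)
  define T where "T = 1 - 1 / (1 + c + cnj c + \<beta>) * (1 / \<beta>) * (c + \<beta>) * (cnj c + \<beta>)"
  have trRQ: "tr (proj b) - tr (proj (v + b) ** proj b) = T"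
    unfolding trQ RQ tr_sm tr_outer bsv T_def by (simp add: mult.assoc)
  have PQ: "outer v v ** proj b = sm (1 / \<beta> * c) (outer v b)"
    unfolding Q sm_mult_right outer_mult sm_sm c_def by simp
  have PRQ: "outer v v ** (proj (v + b) ** proj b)
      = sm (1 / (1 + c + cnj c + \<beta>) * (1 / \<beta>) * (c + \<beta>) * (1 + c)) (outer v b)"
    unfolding RQ sm_mult_right outer_mult sm_sm bsv by (simp add: mult_ac)
  have diff: "outer v v ** proj b - outer v v ** (proj (v + b) ** proj b) = sm (- T) (outer v b)"
    unfolding PQ PRQ T_def scalar_id(1)[OF b0 s0, symmetric]
    by (simp add: sm_def vec_eq_iff algebra_simps)
  obtain d where d_def: "d = b - c *s v" by blast
  have hd: "hip d d = \<beta> - c * cnj c"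
    unfolding d_def hip_simps vv vb \<beta>_def c_def by (simp add: algebra_simps)
  obtain nb where nb: "\<beta> = of_real nb" "nb > 0"
  proof (rule that[of "(norm b)^2"])
    show "\<beta> = of_real ((norm b)^2)" by (simp add: \<beta>_def[symmetric] hip_self)
    show "(norm b)^2 > 0" using indep_b0[OF ind] by simp
  qed
  obtain ns where ns: "1 + c + cnj c + \<beta> = of_real ns" "ns > 0"
  proof (rule that[of "(norm (v + b))^2"])
    show "1 + c + cnj c + \<beta> = of_real ((norm (v + b))^2)" by (simp add: \<sigma>[symmetric] hip_self)
    show "(norm (v + b))^2 > 0" using indep_sum0[OF ind] by simp
  qed
  obtain nd where nd: "\<beta> - c * cnj c = of_real nd" "nd > 0"
  proof (rule that[of "(norm d)^2"])
    show "\<beta> - c * cnj c = of_real ((norm d)^2)" by (simp add: hd[symmetric] hip_self)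
    show "(norm d)^2 > 0" using indep_perp0[OF ind, of c] d_def by simp
  qed
  have "T = (\<beta> - c * cnj c) / ((1 + c + cnj c + \<beta>) * \<beta>)"
    unfolding T_def by (rule scalar_id(2)[OF b0 s0])
  also have "\<dots> = of_real nd / (of_real ns * \<beta>)" by (simp only: nd(1) ns(1))
  also have "\<dots> = of_real nd / (of_real ns * of_real nb)" by (simp only: nb(1))
  finally have Tr: "T = of_real (nd / (ns * nb))" by simp
  have ReT: "Re T = nd / (ns * nb)" "Re T > 0" using Tr nd ns nb by simp_all
  show "Re (tr (proj b) - tr (proj (v + b) ** proj b)) > 0" using trRQ ReT by simp
  have "gB (outer v v) (proj b) (proj (v + b)) = (-1 / Re T) *\<^sub>R sm (- T) (outer v b)"
    unfolding gB_def trRQ diff ..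
  also have "\<dots> = sm (of_real (-1 / Re T) * (- T)) (outer v b)"
    by (simp add: scaleR_sm sm_sm)
  also have "of_real (-1 / Re T) * (- T) = 1"
  proof -
    have T': "T = of_real (Re T)" using Tr by simp
    have "Re T \<noteq> 0" using ReT(2) by linarith
    then show ?thesis by (subst T') (simp add: field_simps)
  qed
  finally show "gB (outer v v) (proj b) (proj (v + b)) = outer v b" by (simp add: sm_1)
qed

lemma norm_unit: "hip v v = 1 \<Longrightarrow> norm v = 1"
  by (metis hip_self norm_ge_zero of_real_1 of_real_eq_iff power2_eq_1_iff abs_of_nonneg abs_1 one_power2 power2_eq_iff_nonneg zero_le_one)

lemma g_repr:
  assumes vv: "hip v v = 1" and ind: "indep v b"
  obtains w r where "ON v w" "r > 0" "b = hip b v *s v + r *\<^sub>R w"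
    "mkf (outer v v, outer v b, outer b b) E1 = outer v v"
    "mkf (outer v v, outer v b, outer b b) E2 = proj b"
    "mkf (outer v v, outer v b, outer b b) E3 = proj (v + b)"
    "gB (outer v v) (proj b) (proj (v + b)) = outer v b"
    "gM (outer v v) (proj b) (proj (v + b)) = r *\<^sub>R outer v w"
    "norm (gM (outer v v) (proj b) (proj (v + b))) = r"
    "gX (outer v v) (proj b) (proj (v + b)) = outer w v + outer v w"
proof -
  have hE: "mkf (outer v v, outer v b, outer b b) E1 = outer v v"
    "mkf (outer v v, outer v b, outer b b) E2 = proj b"
    "mkf (outer v v, outer v b, outer b b) E3 = proj (v + b)"
    using mkf_E[OF ind] proj_unit[OF vv] by simp_all
  have gb: "gB (outer v v) (proj b) (proj (v + b)) = outer v b" by (rule gB_key(2)[OF vv ind])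
  obtain d where d: "d = b - hip b v *s v" by blast
  have d0: "d \<noteq> 0" using indep_perp0[OF ind] d by simp
  define r where "r = norm d"
  have r0: "r > 0" using d0 r_def by simp
  define w where "w = (1 / r) *\<^sub>R d"
  have dw: "d = r *\<^sub>R w" using r0 by (simp add: w_def)
  have hvd: "hip v d = 0" unfolding d hip_simps vv by (simp add: cnj_hip)
  have on: "ON v w"
    unfolding ON_def
  proof (intro conjI)
    show "hip v v = 1" by (rule vv)
    show "hip v w = 0" by (simp add: w_def hip_simps hvd)
    show "hip w w = 1" using r0 by (simp add: w_def hip_simps hip_self r_def power2_eq_square)
  qed
  have bdec: "b = hip b v *s v + r *\<^sub>R w" using d dw by (simp add: algebra_simps)
  have gm: "gM (outer v v) (proj b) (proj (v + b)) = r *\<^sub>R outer v w"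
  proof -
    have "gM (outer v v) (proj b) (proj (v + b)) = outer v b - sm (hip v b) (outer v v)"
      unfolding gM_def gb outer_mult ..
    also have "\<dots> = outer v d"
      unfolding d outer_diff_right outer_smult_right by (simp add: cnj_hip)
    also have "\<dots> = r *\<^sub>R outer v w" by (simp add: dw outer_scaleR_right)
    finally show ?thesis .
  qed
  have nv: "norm v = 1" "norm w = 1" using on norm_unit unfolding ON_def by auto
  have ngm: "norm (gM (outer v v) (proj b) (proj (v + b))) = r"
    unfolding gm using r0 by (simp add: norm_outer nv)
  have gx: "gX (outer v v) (proj b) (proj (v + b)) = outer w v + outer v w"
    unfolding gX_def ngm unfolding gm adj_scaleR adj_outer using r0
    by (simp add: scaleR_add_right add.commute)
  show ?thesis using that[OF on r0 bdec hE gb gm ngm gx] .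
qed

subsection \<open>Topology of Hol1\<close>

lemma Hol1_istop: "istopology (\<lambda>U::(complex^2^2 \<Rightarrow> complex^'k^'k) set. U \<subseteq> Hol1 \<and> (\<forall>f\<in>U. \<exists>e>0. \<forall>g\<in>Hol1. supdist f g < e \<longrightarrow> g \<in> U))"
  unfolding istopology_def
proof (rule conjI; intro allI impI)
  fix S T :: "(complex^2^2 \<Rightarrow> complex^'k^'k) set"
  assume S: "S \<subseteq> Hol1 \<and> (\<forall>f\<in>S. \<exists>e>0. \<forall>g\<in>Hol1. supdist f g < e \<longrightarrow> g \<in> S)"
    and T: "T \<subseteq> Hol1 \<and> (\<forall>f\<in>T. \<exists>e>0. \<forall>g\<in>Hol1. supdist f g < e \<longrightarrow> g \<in> T)"
  show "S \<inter> T \<subseteq> Hol1 \<and> (\<forall>f\<in>S \<inter> T. \<exists>e>0. \<forall>g\<in>Hol1. supdist f g < e \<longrightarrow> g \<in> S \<inter> T)"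
  proof (intro conjI ballI)
    show "S \<inter> T \<subseteq> Hol1" using S by blast
    fix f assume "f \<in> S \<inter> T"
    then obtain e1 e2 where "e1 > 0" "\<forall>g\<in>Hol1. supdist f g < e1 \<longrightarrow> g \<in> S"
      "e2 > 0" "\<forall>g\<in>Hol1. supdist f g < e2 \<longrightarrow> g \<in> T" using S T by blast
    then show "\<exists>e>0. \<forall>g\<in>Hol1. supdist f g < e \<longrightarrow> g \<in> S \<inter> T"
      by (intro exI[of _ "min e1 e2"]) auto
  qed
next
  fix K :: "(complex^2^2 \<Rightarrow> complex^'k^'k) set set"
  assume K: "\<forall>U\<in>K. U \<subseteq> Hol1 \<and> (\<forall>f\<in>U. \<exists>e>0. \<forall>g\<in>Hol1. supdist f g < e \<longrightarrow> g \<in> U)"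
  show "\<Union>K \<subseteq> Hol1 \<and> (\<forall>f\<in>\<Union>K. \<exists>e>0. \<forall>g\<in>Hol1. supdist f g < e \<longrightarrow> g \<in> \<Union>K)"
  proof (intro conjI ballI)
    show "\<Union>K \<subseteq> Hol1" using K by blast
    fix f assume "f \<in> \<Union>K"
    then obtain U where "U \<in> K" "f \<in> U" by blast
    then obtain e where "e > 0" "\<forall>g\<in>Hol1. supdist f g < e \<longrightarrow> g \<in> U" using K by blast
    then show "\<exists>e>0. \<forall>g\<in>Hol1. supdist f g < e \<longrightarrow> g \<in> \<Union>K" using \<open>U \<in> K\<close> by blast
  qed
qed

lemma openin_Hol1: "openin (Hol1_top :: (complex^2^2 \<Rightarrow> complex^'k^'k) topology) U \<longleftrightarrow> U \<subseteq> Hol1 \<and> (\<forall>f\<in>U. \<exists>e>0. \<forall>g\<in>Hol1. supdist f g < e \<longrightarrow> g \<in> U)"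
  unfolding Hol1_top_def by (subst topology_inverse'[OF Hol1_istop]) (rule refl)

lemma topspace_Hol1: "topspace Hol1_top = Hol1"
proof
  show "topspace Hol1_top \<subseteq> Hol1" unfolding topspace_def openin_Hol1 by blast
  have "openin Hol1_top Hol1" unfolding openin_Hol1 by (auto intro: exI[of _ 1])
  then show "Hol1 \<subseteq> topspace Hol1_top" by (rule openin_subset)
qed

lemma CP_nonempty: "(CP :: (complex^'k^'k) set) \<noteq> {}"
proof -
  have "(axis undefined 1 :: complex^'k) \<noteq> 0" by (simp add: axis_eq_0_iff)
  then show ?thesis using proj_in_CP by blast
qed

lemma CP_norm: "M \<in> CP \<Longrightarrow> norm M = 1"
  by (elim CP_unit) (simp add: norm_outer norm_unit)

lemma Hol1_vals: assumes "h \<in> Hol1" "Z \<in> CP" shows "h Z \<in> CP"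
proof -
  obtain v b where vb: "hip v v = 1" "indep v b" "h = mkf (outer v v, outer v b, outer b b)"
    using assms(1) by (rule Hol1_repr)
  obtain z where z: "z \<noteq> 0" "Z = proj z" using assms(2) by (rule CP_proj_cases)
  have "h Z = Fm (outer v v, outer v b, outer b b) Z" using vb(3) mkf_apply[OF assms(2)] by simp
  also have "\<dots> = proj (z$1 *s v + z$2 *s b)" unfolding z(2) by (rule Fm_proj(1)[OF vb(2) z(1)])
  finally have "h Z = proj (z$1 *s v + z$2 *s b)" .
  then show ?thesis using indep_nz[OF vb(2) z(1)] proj_in_CP by simp
qed

lemma supdist_ge:
  assumes "h \<in> Hol1" "k \<in> Hol1" "Z \<in> CP"
  shows "dist (h Z) (k Z) \<le> supdist h k"
  unfolding supdist_def
proof (rule cSUP_upper[OF assms(3)])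
  show "bdd_above ((\<lambda>P. dist (h P) (k P)) ` CP)"
  proof (rule bdd_aboveI[of _ 2])
    fix x assume "x \<in> (\<lambda>P. dist (h P) (k P)) ` CP"
    then obtain P where P: "P \<in> CP" "x = dist (h P) (k P)" by blast
    have "dist (h P) (k P) \<le> norm (h P) + norm (k P)" by (simp add: dist_norm norm_triangle_ineq4)
    moreover have "norm (h P) = 1" "norm (k P) = 1" using CP_norm Hol1_vals assms P by blast+
    ultimately show "x \<le> 2" using P by simp
  qed
qed

lemma supdist_le:
  assumes "\<And>Z. Z \<in> CP \<Longrightarrow> dist (f Z) (g Z) \<le> c"
  shows "supdist f g \<le> c"
  unfolding supdist_def by (rule cSUP_least[OF CP_nonempty assms])

lemma cont_eval:
  fixes Z0 :: "complex^2^2"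
  assumes Z0: "Z0 \<in> CP"
  shows "continuous_map (Hol1_top :: (complex^2^2 \<Rightarrow> complex^'k^'k) topology) euclidean (\<lambda>h. h Z0)"
  unfolding continuous_map_def topspace_Hol1
proof (intro conjI allI impI)
  show "(\<lambda>h. h Z0) \<in> Hol1 \<rightarrow> topspace euclidean" by simp
  fix U :: "(complex^'k^'k) set" assume "openin euclidean U"
  then have U: "open U" by simp
  show "openin Hol1_top {x \<in> Hol1. x Z0 \<in> U}"
    unfolding openin_Hol1
  proof (intro conjI ballI)
    show "{x \<in> Hol1. x Z0 \<in> U} \<subseteq> Hol1" by blast
    fix f assume f: "f \<in> {x \<in> Hol1. x Z0 \<in> U}"
    then obtain e where e: "e > 0" "ball (f Z0) e \<subseteq> U" using U open_contains_ball by blast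
    show "\<exists>e>0. \<forall>g\<in>Hol1. supdist f g < e \<longrightarrow> g \<in> {x \<in> Hol1. x Z0 \<in> U}"
    proof (intro exI[of _ e] conjI ballI impI)
      show "e > 0" by fact
      fix g assume g: "g \<in> Hol1" "supdist f g < e"
      have "dist (f Z0) (g Z0) < e" using supdist_ge[of f g Z0] f g Z0 by simp
      then show "g \<in> {x \<in> Hol1. x Z0 \<in> U}" using e g by auto
    qed
  qed
qed

lemma cont_into_Hol1:
  fixes \<phi> :: "'x \<Rightarrow> (complex^2^2 \<Rightarrow> complex^'k^'k)"
  assumes inH: "\<And>x. x \<in> topspace X \<Longrightarrow> \<phi> x \<in> Hol1"
    and near: "\<And>x e. x \<in> topspace X \<Longrightarrow> e > 0 \<Longrightarrow> \<exists>U. openin X U \<and> x \<in> U \<and> (\<forall>y\<in>U. supdist (\<phi> x) (\<phi> y) < e)"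
  shows "continuous_map X Hol1_top \<phi>"
  unfolding continuous_map_def topspace_Hol1
proof (intro conjI allI impI)
  show "\<phi> \<in> topspace X \<rightarrow> Hol1" using inH by blast
  fix U :: "(complex^2^2 \<Rightarrow> complex^'k^'k) set" assume "openin Hol1_top U"
  then have U: "U \<subseteq> Hol1" "\<And>f. f \<in> U \<Longrightarrow> \<exists>e>0. \<forall>g\<in>Hol1. supdist f g < e \<longrightarrow> g \<in> U"
    unfolding openin_Hol1 by blast+
  show "openin X {x \<in> topspace X. \<phi> x \<in> U}"
  proof (subst openin_subopen, intro ballI)
    fix x assume x: "x \<in> {x \<in> topspace X. \<phi> x \<in> U}"
    then obtain e where e: "e > 0" "\<forall>g\<in>Hol1. supdist (\<phi> x) g < e \<longrightarrow> g \<in> U" using U by blast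
    obtain V where V: "openin X V" "x \<in> V" "\<forall>y\<in>V. supdist (\<phi> x) (\<phi> y) < e"
      using near[of x e] x e by blast
    have "V \<subseteq> {x \<in> topspace X. \<phi> x \<in> U}"
    proof
      fix y assume "y \<in> V"
      then have "y \<in> topspace X" using V openin_subset by blast
      then show "y \<in> {x \<in> topspace X. \<phi> x \<in> U}" using V e inH \<open>y \<in> V\<close> by blast
    qed
    then show "\<exists>T. openin X T \<and> x \<in> T \<and> T \<subseteq> {x \<in> topspace X. \<phi> x \<in> U}" using V by blast
  qed
qed

lemma proj_cont: "continuous_on (sphere 0 1) (proj :: complex^'k \<Rightarrow> complex^'k^'k)"
  unfolding proj_def
  by (intro continuous_intros) auto

lemma CP_sphere: "(CP :: (complex^'k^'k) set) = proj ` sphere 0 1"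
proof
  show "proj ` sphere 0 1 \<subseteq> (CP :: (complex^'k^'k) set)"
    unfolding CP_def by auto
  show "(CP :: (complex^'k^'k) set) \<subseteq> proj ` sphere 0 1"
  proof
    fix M :: "complex^'k^'k" assume "M \<in> CP"
    then obtain u where u: "u \<noteq> 0" "M = proj u" by (auto simp: CP_def)
    have "proj ((1 / norm u) *\<^sub>R u) = proj u" using u by (intro proj_scaleR) simp
    moreover have "(1 / norm u) *\<^sub>R u \<in> sphere 0 1" using u by simp
    ultimately show "M \<in> proj ` sphere 0 1" using u by (metis image_eqI)
  qed
qed

lemma CP_compact: "compact (CP :: (complex^'k^'k) set)"
  unfolding CP_sphere by (intro compact_continuous_image proj_cont compact_sphere)

lemma sup_near:
  fixes F :: "'a::heine_borel \<Rightarrow> 'b::metric_space \<Rightarrow> 'c::metric_space"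
  assumes K: "compact K" and r: "r > 0"
    and cont: "continuous_on (cball xc r \<times> K) (\<lambda>p. F (fst p) (snd p))" and e: "e > 0"
  shows "\<exists>d>0. \<forall>x. dist x xc < d \<longrightarrow> (\<forall>z\<in>K. dist (F x z) (F xc z) < e)"
proof -
  have "uniformly_continuous_on (cball xc r \<times> K) (\<lambda>p. F (fst p) (snd p))"
    by (rule compact_uniformly_continuous[OF cont compact_Times[OF compact_cball K]])
  then obtain d where d: "d > 0" "\<forall>p\<in>cball xc r \<times> K. \<forall>p'\<in>cball xc r \<times> K.
      dist p' p < d \<longrightarrow> dist (F (fst p') (snd p')) (F (fst p) (snd p)) < e"
    using e unfolding uniformly_continuous_on_def by blast
  show ?thesis
  proof (intro exI[of _ "min d r"] conjI allI impI ballI)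
    show "min d r > 0" using d r by simp
    fix x z assume x: "dist x xc < min d r" and z: "z \<in> K"
    have "(x, z) \<in> cball xc r \<times> K" "(xc, z) \<in> cball xc r \<times> K" using x z r
      by (auto simp: dist_commute)
    moreover have "dist (x, z) (xc, z) < d" using x by (simp add: dist_Pair_Pair)
    ultimately show "dist (F x z) (F xc z) < e" using d by fastforce
  qed
qed

lemma Lm_alt: "Lm x Z = (\<chi> i j. Z$1$1 * (fst x)$i$j + Z$1$2 * (fst (snd x))$i$j
     + Z$2$1 * cnj ((fst (snd x))$j$i) + Z$2$2 * (snd (snd x))$i$j)"
  by (simp add: Lm_def split: prod.splits)

lemma Lm_cont: "continuous_on S (\<lambda>p. Lm (fst p) (snd p))"
  unfolding Lm_alt by (intro continuous_intros)

lemma trLm_cont: "continuous_on S (\<lambda>p. tr (Lm (fst p) (snd p)))"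
  unfolding tr_def by (intro continuous_intros Lm_cont)

lemma Fm_cont:
  assumes "\<And>p. p \<in> S \<Longrightarrow> tr (Lm (fst p) (snd p)) \<noteq> 0"
  shows "continuous_on S (\<lambda>p. Fm (fst p) (snd p))"
  unfolding Fm_def sm_def
  by (intro continuous_intros continuous_on_divide Lm_cont trLm_cont) (use assms in auto)

lemma Fm_sup_cont:
  assumes x0: "x0 \<in> Adm" and e: "e > 0"
  shows "\<exists>d>0. \<forall>x. dist x x0 < d \<longrightarrow> (\<forall>Z\<in>CP. dist (Fm x Z) (Fm x0 Z) < e)"
proof -
  let ?K = "CP :: (complex^2^2) set"
  have "continuous_on ?K (\<lambda>Z. norm (tr (Lm x0 Z)))"
    unfolding tr_def Lm_alt by (intro continuous_intros)
  then obtain Zm where Zm: "Zm \<in> ?K" "\<forall>Z\<in>?K. norm (tr (Lm x0 Zm)) \<le> norm (tr (Lm x0 Z))"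
    using continuous_attains_inf[OF CP_compact CP_nonempty] by blast
  define m where "m = norm (tr (Lm x0 Zm))"
  have m: "m > 0" using Adm_tr[OF x0 Zm(1)] m_def by simp
  obtain d1 where d1: "d1 > 0" "\<forall>x. dist x x0 < d1 \<longrightarrow> (\<forall>Z\<in>?K. dist (tr (Lm x Z)) (tr (Lm x0 Z)) < m / 2)"
    using sup_near[where xc=x0 and e="m/2", OF CP_compact zero_less_one trLm_cont] m by auto
  have nz: "tr (Lm x Z) \<noteq> 0" if "dist x x0 < d1" "Z \<in> ?K" for x Z
  proof
    assume a: "tr (Lm x Z) = 0"
    have "dist (tr (Lm x Z)) (tr (Lm x0 Z)) < m / 2" using d1(2) that by blast
    then have "norm (tr (Lm x0 Z)) < m / 2" using a by (simp add: dist_norm)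
    moreover have "m \<le> norm (tr (Lm x0 Z))" using Zm that m_def by blast
    ultimately show False using m by simp
  qed
  have "continuous_on (cball x0 (d1/2) \<times> ?K) (\<lambda>p. Fm (fst p) (snd p))"
  proof (rule Fm_cont)
    fix p assume "p \<in> cball x0 (d1/2) \<times> ?K"
    then have "dist (fst p) x0 < d1" "snd p \<in> ?K" using d1 by (auto simp: dist_commute)
    then show "tr (Lm (fst p) (snd p)) \<noteq> 0" by (rule nz)
  qed
  moreover have "d1 / 2 > 0" using d1 by simp
  ultimately show ?thesis using sup_near[where F=Fm and xc=x0, OF CP_compact _ _ e] by blast
qed

lemma mk_cont:
  assumes phi: "continuous_map X (top_of_set Adm) \<phi>"
  shows "continuous_map X Hol1_top (\<lambda>y. mkf (\<phi> y))"
proof (rule cont_into_Hol1)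
  have inA: "\<phi> y \<in> Adm" if "y \<in> topspace X" for y
    using phi that unfolding continuous_map_def by auto
  show "mkf (\<phi> y) \<in> Hol1" if "y \<in> topspace X" for y using inA[OF that] Adm_Hol1 by blast
  fix y and e :: real assume y: "y \<in> topspace X" and e: "e > 0"
  obtain d where d: "d > 0" "\<forall>x. dist x (\<phi> y) < d \<longrightarrow> (\<forall>Z\<in>CP. dist (Fm x Z) (Fm (\<phi> y) Z) < e / 2)"
    using Fm_sup_cont[OF inA[OF y], of "e/2"] e by auto
  define U where "U = {x \<in> topspace X. \<phi> x \<in> Adm \<inter> ball (\<phi> y) d}"
  have "openin X U" unfolding U_def
    by (rule openin_continuous_map_preimage[OF phi]) (simp add: openin_open_Int)
  moreover have "y \<in> U" using y inA d by (simp add: U_def)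
  moreover have "supdist (mkf (\<phi> y)) (mkf (\<phi> y')) < e" if "y' \<in> U" for y'
  proof -
    have "dist (\<phi> y') (\<phi> y) < d" using that by (simp add: U_def dist_commute)
    then have "\<forall>Z\<in>CP. dist (Fm (\<phi> y') Z) (Fm (\<phi> y) Z) < e / 2" using d by blast
    then have "supdist (mkf (\<phi> y)) (mkf (\<phi> y')) \<le> e / 2"
      by (intro supdist_le) (simp add: mkf_apply dist_commute less_imp_le)
    then show ?thesis using e by simp
  qed
  ultimately show "\<exists>U. openin X U \<and> y \<in> U \<and> (\<forall>y'\<in>U. supdist (mkf (\<phi> y)) (mkf (\<phi> y')) < e)"
    by blast
qed

lemma mm_cont [continuous_intros]:
  fixes f g :: "'x::topological_space \<Rightarrow> complex^'k^'k"
  shows "continuous_on S f \<Longrightarrow> continuous_on S g \<Longrightarrow> continuous_on S (\<lambda>x. f x ** g x)"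
  by (rule bounded_bilinear.continuous_on[OF bb_mm])

lemma adj_cont [continuous_intros]:
  fixes f :: "'x::topological_space \<Rightarrow> complex^'k^'k"
  shows "continuous_on S f \<Longrightarrow> continuous_on S (\<lambda>x. adj (f x))"
  unfolding adj_def by (intro continuous_intros)

lemma tr_cont [continuous_intros]:
  fixes f :: "'x::topological_space \<Rightarrow> complex^'k^'k"
  shows "continuous_on S f \<Longrightarrow> continuous_on S (\<lambda>x. tr (f x))"
  unfolding tr_def by (intro continuous_intros)

definition S3 :: "((complex^'k^'k) \<times> (complex^'k^'k) \<times> (complex^'k^'k)) set" where
  "S3 = {(outer v v, proj b, proj (v + b)) | v b. hip v v = 1 \<and> indep v b}"

definition trip :: "(complex^2^2 \<Rightarrow> complex^'k^'k) \<Rightarrow> (complex^'k^'k) \<times> (complex^'k^'k) \<times> (complex^'k^'k)" where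
  "trip h = (h E1, h E2, h E3)"

definition G3 :: "(complex^'k^'k) \<times> (complex^'k^'k) \<times> (complex^'k^'k) \<Rightarrow> (complex^'k^'k) \<times> (complex^'k^'k)" where
  "G3 p = (fst p, gX (fst p) (fst (snd p)) (snd (snd p)))"

definition gg :: "(complex^2^2 \<Rightarrow> complex^'k^'k) \<Rightarrow> (complex^'k^'k) \<times> (complex^'k^'k)" where
  "gg h = G3 (trip h)"

definition fphi :: "(complex^'k^'k) \<times> (complex^'k^'k) \<Rightarrow> (complex^'k^'k) \<times> (complex^'k^'k) \<times> (complex^'k^'k)" where
  "fphi x = (fst x, fst x ** snd x, adj (fst x ** snd x) ** (fst x ** snd x))"

definition ff :: "(complex^'k^'k) \<times> (complex^'k^'k) \<Rightarrow> (complex^2^2 \<Rightarrow> complex^'k^'k)" where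
  "ff x = mkf (fphi x)"

definition Bt :: "real \<Rightarrow> (complex^'k^'k) \<times> (complex^'k^'k) \<times> (complex^'k^'k) \<Rightarrow> complex^'k^'k" where
  "Bt t p = (1 - t) *\<^sub>R ((1 / norm (gM (fst p) (fst (snd p)) (snd (snd p)))) *\<^sub>R gM (fst p) (fst (snd p)) (snd (snd p)))
      + t *\<^sub>R gB (fst p) (fst (snd p)) (snd (snd p))"

definition hpsi :: "real \<times> (complex^'k^'k) \<times> (complex^'k^'k) \<times> (complex^'k^'k) \<Rightarrow> (complex^'k^'k) \<times> (complex^'k^'k) \<times> (complex^'k^'k)" where
  "hpsi q = (fst (snd q), Bt (fst q) (snd q), adj (Bt (fst q) (snd q)) ** Bt (fst q) (snd q))"

definition HH :: "real \<times> (complex^2^2 \<Rightarrow> complex^'k^'k) \<Rightarrow> (complex^2^2 \<Rightarrow> complex^'k^'k)" where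
  "HH q = mkf (hpsi (fst q, trip (snd q)))"

lemma S3_cases:
  assumes "p \<in> S3"
  obtains v b w r where "hip v v = 1" "indep v b" "p = (outer v v, proj b, proj (v + b))"
    "ON v w" "r > 0" "b = hip b v *s v + r *\<^sub>R w"
    "Re (tr (proj b) - tr (proj (v + b) ** proj b)) > 0"
    "gB (outer v v) (proj b) (proj (v + b)) = outer v b"
    "gM (outer v v) (proj b) (proj (v + b)) = r *\<^sub>R outer v w"
    "norm (gM (outer v v) (proj b) (proj (v + b))) = r"
    "gX (outer v v) (proj b) (proj (v + b)) = outer w v + outer v w"
proof -
  obtain v b where vb: "hip v v = 1" "indep v b" "p = (outer v v, proj b, proj (v + b))"
    using assms unfolding S3_def by blast
  obtain w r where "ON v w" "r > 0" "b = hip b v *s v + r *\<^sub>R w"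
    "gB (outer v v) (proj b) (proj (v + b)) = outer v b"
    "gM (outer v v) (proj b) (proj (v + b)) = r *\<^sub>R outer v w"
    "norm (gM (outer v v) (proj b) (proj (v + b))) = r"
    "gX (outer v v) (proj b) (proj (v + b)) = outer w v + outer v w"
    using g_repr[OF vb(1,2)] by metis
  then show ?thesis using that[OF vb] gB_key(1)[OF vb(1,2)] by blast
qed

lemma trip_S3: assumes "h \<in> Hol1" shows "trip h \<in> S3"
proof -
  obtain v b where vb: "hip v v = 1" "indep v b" "h = mkf (outer v v, outer v b, outer b b)"
    using assms by (rule Hol1_repr)
  show ?thesis unfolding S3_def trip_def vb(3) mkf_E[OF vb(2)] proj_unit[OF vb(1)]
    using vb(1,2) by blast
qed

lemma gB_cont: "continuous_on S3 (\<lambda>p. gB (fst p) (fst (snd p)) (snd (snd p)))"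
proof -
  have "\<forall>p\<in>S3. Re (tr (fst (snd p)) - tr (snd (snd p) ** fst (snd p))) \<noteq> 0"
    by (auto elim!: S3_cases)
  then show ?thesis unfolding gB_def
    by (intro continuous_intros continuous_on_divide) auto
qed

lemma gM_cont: "continuous_on S3 (\<lambda>p. gM (fst p) (fst (snd p)) (snd (snd p)))"
  unfolding gM_def by (intro continuous_intros gB_cont)

lemma gM_nz: "p \<in> S3 \<Longrightarrow> norm (gM (fst p) (fst (snd p)) (snd (snd p))) \<noteq> 0"
  by (auto elim!: S3_cases)

lemma gX_cont: "continuous_on S3 (\<lambda>p. gX (fst p) (fst (snd p)) (snd (snd p)))"
  unfolding gX_def by (intro continuous_intros continuous_on_divide gM_cont) (auto dest: gM_nz)

lemma G3_cont: "continuous_on S3 G3"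
  unfolding G3_def by (intro continuous_intros gX_cont)

lemma Bt_cont: "continuous_on ({0..1} \<times> S3) (\<lambda>q. Bt (fst q) (snd q))"
proof -
  have 1: "continuous_on ({0..1} \<times> S3) (\<lambda>q. gM (fst (snd q)) (fst (snd (snd q))) (snd (snd (snd q))))"
    by (rule continuous_on_compose2[OF gM_cont continuous_on_snd]) auto
  have 2: "continuous_on ({0..1} \<times> S3) (\<lambda>q. gB (fst (snd q)) (fst (snd (snd q))) (snd (snd (snd q))))"
    by (rule continuous_on_compose2[OF gB_cont continuous_on_snd]) auto
  have 3: "\<forall>q\<in>{0..1} \<times> S3. norm (gM (fst (snd q)) (fst (snd (snd q))) (snd (snd (snd q)))) \<noteq> 0"
    using gM_nz by auto
  show ?thesis unfolding Bt_def
    by (intro continuous_intros continuous_on_divide 1 2) (use 3 in auto)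
qed

lemma hpsi_cont: "continuous_on ({0..1} \<times> S3) hpsi"
  unfolding hpsi_def by (intro continuous_intros Bt_cont)

lemma fphi_cont: "continuous_on S fphi"
  unfolding fphi_def by (intro continuous_intros)

lemma trip_cont: "continuous_map Hol1_top euclidean (trip :: (complex^2^2 \<Rightarrow> complex^'k^'k) \<Rightarrow> _)"
proof -
  have "continuous_map Hol1_top (prod_topology euclidean (prod_topology euclidean euclidean))
      (\<lambda>h::complex^2^2 \<Rightarrow> complex^'k^'k. (h E1, h E2, h E3))"
    by (intro continuous_map_pairedI cont_eval E_in_CP)
  then show ?thesis unfolding trip_def by simp
qed

lemma sm_0: "sm 0 M = 0"
  by (simp add: sm_def vec_eq_iff)

lemma ON_indep: assumes "ON v w" shows "indep v w"
  unfolding indep_def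
proof (intro allI impI)
  fix c d assume e: "c *s v + d *s w = 0"
  have "hip (c *s v + d *s w) v = c" "hip (c *s v + d *s w) w = d"
    using assms ON_wv[OF assms] by (simp_all add: hip_simps ON_def)
  then have "hip 0 v = c" "hip 0 w = d" unfolding e .
  then show "c = 0 \<and> d = 0" by (simp add: hip_def)
qed

lemma fphi_ON:
  assumes "ON v w"
  shows "fphi (outer v v, outer w v + outer v w) = (outer v v, outer v w, outer w w)"
proof -
  have vv: "hip v v = 1" and wv: "hip w v = 0" using assms ON_wv[OF assms] by (auto simp: ON_def)
  have PX: "outer v v ** (outer w v + outer v w) = outer v w"
    by (simp add: matrix_add_ldistrib outer_mult vv wv sm_0 sm_1)
  show ?thesis unfolding fphi_def fst_conv snd_conv PX adj_outer outer_mult vv sm_1 ..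
qed

lemma UTCP_fphi:
  assumes "x \<in> UTCP"
  obtains v w where "ON v w" "x = (outer v v, outer w v + outer v w)"
    "fphi x = (outer v v, outer v w, outer w w)" "fphi x \<in> Adm"
proof -
  obtain P X where x: "x = (P, X)" by (cases x)
  obtain v w where vw: "ON v w" "P = outer v v" "X = outer w v + outer v w"
    using UTCP_imp[of P X] assms x by blast
  have f: "fphi x = (outer v v, outer v w, outer w w)" using fphi_ON[OF vw(1)] x vw by simp
  have "fphi x \<in> Adm" unfolding f Adm_def using ON_indep[OF vw(1)] by blast
  then show ?thesis using that vw x f by blast
qed

lemma ev_mkf: "indep v b \<Longrightarrow> hip v v = 1 \<Longrightarrow> ev (mkf (outer v v, outer v b, outer b b)) = outer v v"
  by (simp add: ev_eq mkf_E proj_unit)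

lemma ff_props:
  assumes "x \<in> UTCP"
  shows "ff x \<in> Hol1" "ev (ff x) = fst x"
proof -
  obtain v w where vw: "ON v w" "x = (outer v v, outer w v + outer v w)"
    "fphi x = (outer v v, outer v w, outer w w)" "fphi x \<in> Adm"
    using assms by (rule UTCP_fphi)
  show "ff x \<in> Hol1" unfolding ff_def using vw(4) by (rule Adm_Hol1)
  show "ev (ff x) = fst x" unfolding ff_def vw(3) using vw(1,2) ON_indep[OF vw(1)]
    by (simp add: ev_mkf ON_def)
qed

lemma gg_props:
  assumes "h \<in> Hol1"
  shows "gg h \<in> UTCP" "fst (gg h) = ev h"
proof -
  have p: "trip h \<in> S3" by (rule trip_S3[OF assms])
  then obtain v b w r where d: "hip v v = 1" "indep v b" "trip h = (outer v v, proj b, proj (v + b))"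
    "ON v w" "gX (outer v v) (proj b) (proj (v + b)) = outer w v + outer v w"
    by (rule S3_cases) (rule that, assumption+)
  have g: "gg h = (outer v v, outer w v + outer v w)" by (simp add: gg_def G3_def d(3) d(5))
  show "gg h \<in> UTCP" unfolding g by (rule UTCP_intro[OF d(4)])
  have "ev h = outer v v" using d(3) by (simp add: ev_eq trip_def)
  then show "fst (gg h) = ev h" using g by simp
qed

lemma gf_id:
  assumes "x \<in> UTCP"
  shows "gg (ff x) = x"
proof -
  obtain v w where vw: "ON v w" "x = (outer v v, outer w v + outer v w)"
    "fphi x = (outer v v, outer v w, outer w w)"
    using assms by (rule UTCP_fphi)
  have vv: "hip v v = 1" "hip w w = 1" "hip w v = 0" using vw(1) ON_wv[OF vw(1)] by (auto simp: ON_def)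
  have ind: "indep v w" by (rule ON_indep[OF vw(1)])
  obtain w' r where d: "ON v w'" "r > 0" "w = hip w v *s v + r *\<^sub>R w'"
    "gX (outer v v) (proj w) (proj (v + w)) = outer w' v + outer v w'"
    using g_repr[OF vv(1) ind] by metis
  have ww: "w = r *\<^sub>R w'" using d(3) vv(3) by simp
  have "hip w w = of_real (r * r) * hip w' w'" unfolding ww by (simp add: hip_simps)
  then have "complex_of_real (r * r) = 1" using vv(2) d(1) by (simp add: ON_def)
  then have "r * r = 1" using of_real_eq_1_iff by blast
  then have "r = 1" using d(2) by (metis mult_cancel_right1 mult_le_cancel_left1 mult_less_cancel_left1 not_less_iff_gr_or_eq order_less_imp_le zero_less_one)
  then have w': "w' = w" using ww by simp
  have tr: "trip (ff x) = (outer v v, proj w, proj (v + w))"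
    unfolding ff_def vw(3) trip_def mkf_E[OF ind] proj_unit[OF vv(1)] ..
  show ?thesis unfolding gg_def tr G3_def using d(4) w' vw(2) by simp
qed

lemma HH_props:
  assumes h: "h \<in> Hol1" and t: "t \<in> {0..1}"
  shows "hpsi (t, trip h) \<in> Adm" "HH (t, h) \<in> Hol1" "ev (HH (t, h)) = ev h"
    "HH (0, h) = ff (gg h)" "HH (1, h) = h"
proof -
  obtain v b where vb: "hip v v = 1" "indep v b" "h = mkf (outer v v, outer v b, outer b b)"
    using h by (rule Hol1_repr)
  obtain w r where d: "ON v w" "r > 0" "b = hip b v *s v + r *\<^sub>R w"
    "gB (outer v v) (proj b) (proj (v + b)) = outer v b"
    "gM (outer v v) (proj b) (proj (v + b)) = r *\<^sub>R outer v w"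
    "norm (gM (outer v v) (proj b) (proj (v + b))) = r"
    "gX (outer v v) (proj b) (proj (v + b)) = outer w v + outer v w"
    using g_repr[OF vb(1,2)] by metis
  have tr: "trip h = (outer v v, proj b, proj (v + b))"
    unfolding trip_def vb(3) mkf_E[OF vb(2)] proj_unit[OF vb(1)] ..
  have vw: "hip v w = 0" "hip w w = 1" "hip w v = 0" using d(1) ON_wv[OF d(1)] by (auto simp: ON_def)
  have nvw: "norm (outer v w) = 1" unfolding norm_outer norm_unit[OF vb(1)] norm_unit[OF vw(2)] by simp
  have gen: "hpsi (s, trip h) = (outer v v, outer v ((1 - s) *\<^sub>R w + s *\<^sub>R b), outer ((1 - s) *\<^sub>R w + s *\<^sub>R b) ((1 - s) *\<^sub>R w + s *\<^sub>R b))"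
    for s
  proof -
    have "Bt s (trip h) = outer v ((1 - s) *\<^sub>R w + s *\<^sub>R b)"
      using d(2) nvw unfolding Bt_def tr fst_conv snd_conv d(4) d(5)
      by (simp add: outer_add_right outer_scaleR_right)
    then show ?thesis unfolding hpsi_def fst_conv snd_conv
      by (simp add: adj_outer outer_mult vb(1) sm_1 tr)
  qed
  define bt where "bt = (1 - t) *\<^sub>R w + t *\<^sub>R b"
  have ind: "indep v bt" unfolding indep_def
  proof (intro allI impI)
    fix \<alpha> \<beta> assume e: "\<alpha> *s v + \<beta> *s bt = 0"
    have hbw: "hip b w = of_real r" by (subst d(3)) (simp add: hip_simps vw)
    have "hip (\<alpha> *s v + \<beta> *s bt) w = \<beta> * of_real ((1 - t) + t * r)"
      by (simp add: bt_def hip_simps vw hbw algebra_simps)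
    then have "\<beta> * of_real ((1 - t) + t * r) = 0" unfolding e by (simp add: hip_def)
    moreover have "(1 - t) + t * r > 0" using t d(2)
      by (cases "t = 0") (auto intro: add_nonneg_pos simp: add_pos_nonneg)
    ultimately have b0: "\<beta> = 0" by (metis mult_eq_0_iff of_real_eq_0_iff less_irrefl)
    then have "hip (\<alpha> *s v + \<beta> *s bt) v = \<alpha>" by (simp add: hip_simps vb(1))
    then have "\<alpha> = 0" unfolding e by (simp add: hip_def)
    then show "\<alpha> = 0 \<and> \<beta> = 0" using b0 by simp
  qed
  show A: "hpsi (t, trip h) \<in> Adm" unfolding gen Adm_def using ind bt_def by blast
  show "HH (t, h) \<in> Hol1" unfolding HH_def fst_conv snd_conv by (rule Adm_Hol1[OF A])
  show "ev (HH (t, h)) = ev h"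
    unfolding HH_def fst_conv snd_conv gen bt_def[symmetric]
    using ev_mkf[OF ind vb(1)] ev_mkf[OF vb(2,1)] vb(3) by simp
  have gg: "gg h = (outer v v, outer w v + outer v w)" by (simp add: gg_def G3_def tr d(7))
  show "HH (0, h) = ff (gg h)"
    unfolding HH_def fst_conv snd_conv gen gg ff_def fphi_ON[OF d(1)] by simp
  have "HH (1, h) = mkf (outer v v, outer v b, outer b b)"
    unfolding HH_def fst_conv snd_conv gen by simp
  then show "HH (1, h) = h" using vb(3) by simp
qed

lemma ff_cont: "continuous_map (top_of_set UTCP) Hol1_top ff"
proof -
  have "continuous_map (top_of_set UTCP) (top_of_set Adm) fphi"
  proof (rule continuous_map_into_subtopology)
    show "continuous_map (top_of_set UTCP) euclidean fphi" using fphi_cont by simp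
    show "fphi \<in> topspace (top_of_set UTCP) \<rightarrow> Adm" by (auto elim: UTCP_fphi)
  qed
  from mk_cont[OF this] show ?thesis by (simp add: ff_def[abs_def])
qed

lemma gg_cont: "continuous_map Hol1_top (top_of_set UTCP) gg"
proof -
  have t: "continuous_map Hol1_top (top_of_set S3) trip"
    by (rule continuous_map_into_subtopology[OF trip_cont]) (auto simp: topspace_Hol1 trip_S3)
  have G: "continuous_map (top_of_set S3) euclidean G3" using G3_cont by simp
  have "continuous_map Hol1_top euclidean gg"
    using continuous_map_compose[OF t G] by (simp add: gg_def[abs_def] o_def)
  then show ?thesis
    by (rule continuous_map_into_subtopology) (auto simp: topspace_Hol1 gg_props)
qed

lemma HH_cont: "continuous_map (prod_topology (top_of_set {0..1}) Hol1_top) Hol1_top HH"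
proof -
  let ?X = "prod_topology (top_of_set {0..1::real}) Hol1_top"
  have m: "continuous_map ?X (top_of_set ({0..1} \<times> S3)) (\<lambda>q. (fst q, trip (snd q)))"
  proof (rule continuous_map_into_subtopology)
    have "continuous_map ?X (prod_topology euclidean euclidean) (\<lambda>q. (fst q, trip (snd q)))"
    proof (intro continuous_map_pairedI)
      show "continuous_map ?X euclidean fst"
        using continuous_map_fst[of "top_of_set {0..1::real}" Hol1_top]
        by (rule continuous_map_into_fulltopology)
      show "continuous_map ?X euclidean (\<lambda>q. trip (snd q))"
        using continuous_map_compose[OF continuous_map_snd trip_cont] by (simp add: o_def)
    qed
    then show "continuous_map ?X euclidean (\<lambda>q. (fst q, trip (snd q)))" by simp
    show "(\<lambda>q. (fst q, trip (snd q))) \<in> topspace ?X \<rightarrow> {0..1} \<times> S3"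
      by (auto simp: topspace_Hol1 trip_S3)
  qed
  have hp: "continuous_map (top_of_set ({0..1} \<times> S3)) euclidean hpsi" using hpsi_cont by simp
  have "continuous_map ?X (top_of_set Adm) (\<lambda>q. hpsi (fst q, trip (snd q)))"
  proof (rule continuous_map_into_subtopology)
    show "continuous_map ?X euclidean (\<lambda>q. hpsi (fst q, trip (snd q)))"
      using continuous_map_compose[OF m hp] by (simp add: o_def)
    show "(\<lambda>q. hpsi (fst q, trip (snd q))) \<in> topspace ?X \<rightarrow> Adm"
      by (auto simp: topspace_Hol1 HH_props(1))
  qed
  from mk_cont[OF this] show ?thesis by (simp add: HH_def[abs_def])
qed

theorem lemma2p1:
  fixes i0 :: "'n::finite"
  assumes "CARD('n) \<ge> 2"
  shows "\<exists>(f :: (complex^'n^'n) \<times> (complex^'n^'n) \<Rightarrow> ((complex^2^2) \<Rightarrow> (complex^'n^'n)))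
           (g :: ((complex^2^2) \<Rightarrow> (complex^'n^'n)) \<Rightarrow> (complex^'n^'n) \<times> (complex^'n^'n)).
     continuous_map (top_of_set UTCP) Hol1_top f \<and>
     continuous_map Hol1_top (top_of_set UTCP) g \<and>
     (\<forall>x\<in>UTCP. ev (f x) = fst x) \<and>
     (\<forall>h\<in>Hol1. fst (g h) = ev h) \<and>
     homotopic_with (\<lambda>k. \<forall>x\<in>UTCP. fst (k x) = fst x)
        (top_of_set UTCP) (top_of_set UTCP) (g \<circ> f) id \<and>
     homotopic_with (\<lambda>k. \<forall>h\<in>Hol1. ev (k h) = ev h)
        Hol1_top Hol1_top (f \<circ> g) id \<and>
     (let b = proj (axis i0 1 :: complex^'n);
          F = {x\<in>UTCP. fst x = b};
          R = {h\<in>Hol1. ev h = b}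
      in f ` F \<subseteq> R \<and> g ` R \<subseteq> F \<and>
         homotopic_with (\<lambda>_. True) (subtopology (top_of_set UTCP) F)
            (subtopology (top_of_set UTCP) F) (g \<circ> f) id \<and>
         homotopic_with (\<lambda>_. True) (subtopology Hol1_top R)
            (subtopology Hol1_top R) (f \<circ> g) id)"
proof -
  let ?b = "proj (axis i0 1 :: complex^'n)"
  let ?F = "{x\<in>UTCP. fst x = ?b}"
  let ?R = "{h\<in>Hol1. ev h = ?b}"
  have H0: "HH (0, h) = ff (gg h)" "HH (1, h) = h" if "h \<in> Hol1" for h
    using HH_props(4,5)[OF that, of 0] by simp_all
  have c1: "continuous_map (top_of_set UTCP) Hol1_top ff" by (rule ff_cont)
  have c2: "continuous_map Hol1_top (top_of_set UTCP) gg" by (rule gg_cont)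
  have e1: "\<forall>x\<in>UTCP. ev (ff x) = fst x" using ff_props by blast
  have e2: "\<forall>h\<in>Hol1. fst (gg h) = ev h" using gg_props by blast
  have h1: "homotopic_with (\<lambda>k. \<forall>x\<in>UTCP. fst (k x) = fst x)
        (top_of_set UTCP) (top_of_set UTCP) (gg \<circ> ff) id"
    by (rule homotopic_with_equal) (auto simp: gf_id intro: continuous_map_compose[OF c1 c2])
  have h2: "homotopic_with (\<lambda>k. \<forall>h\<in>Hol1. ev (k h) = ev h) Hol1_top Hol1_top (ff \<circ> gg) id"
  proof (subst homotopic_with, goal_cases)
    case 1 then show ?case by (simp add: topspace_Hol1)
  next
    case 2
    show ?case
      by (intro exI[of _ HH] conjI ballI)
        (auto simp: topspace_Hol1 HH_cont HH_props H0)
  qed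
  have sub1: "ff ` ?F \<subseteq> ?R" using ff_props by auto
  have sub2: "gg ` ?R \<subseteq> ?F"
  proof (rule image_subsetI)
    fix h assume "h \<in> ?R"
    then show "gg h \<in> ?F" using gg_props[of h] by simp
  qed
  have h3: "homotopic_with (\<lambda>_. True) (subtopology (top_of_set UTCP) ?F)
            (subtopology (top_of_set UTCP) ?F) (gg \<circ> ff) id"
  proof (rule homotopic_with_equal)
    show "continuous_map (subtopology (top_of_set UTCP) ?F) (subtopology (top_of_set UTCP) ?F) (gg \<circ> ff)"
      by (rule continuous_map_into_subtopology[OF continuous_map_from_subtopology[OF continuous_map_compose[OF c1 c2]]])
        (auto simp: gf_id)
  qed (auto simp: gf_id)
  have pt: "prod_topology (top_of_set {0..1}) (subtopology Hol1_top ?R)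
      = subtopology (prod_topology (top_of_set {0..1::real}) Hol1_top) ({0..1} \<times> ?R)"
    by (simp add: subtopology_Times subtopology_subtopology)
  have h4: "homotopic_with (\<lambda>_. True) (subtopology Hol1_top ?R) (subtopology Hol1_top ?R) (ff \<circ> gg) id"
  proof (subst homotopic_with, goal_cases)
    case 1 then show ?case by simp
  next
    case 2
    have "continuous_map (prod_topology (top_of_set {0..1}) (subtopology Hol1_top ?R)) (subtopology Hol1_top ?R) HH"
      unfolding pt
      by (rule continuous_map_into_subtopology[OF continuous_map_from_subtopology[OF HH_cont]])
        (auto simp: topspace_Hol1 HH_props)
    then show ?case
      by (intro exI[of _ HH] conjI ballI) (auto simp: topspace_Hol1 HH_props H0)
  qed
  show ?thesis
    unfolding Let_def
    by (intro exI[of _ ff] exI[of _ gg] conjI c1 c2 e1 e2 h1 h2 sub1 sub2 h3 h4)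
qed


end
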